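(* Consider a Factored Non-stationary MDP whose data are generated by the structural equations below, and suppose that all change factors $\boldsymbol{\theta}^s_t$ and $\boldsymbol{\theta}^r_t$ are observed (so the joint process of states, actions, rewards and change factors is a Markov process). Assume the causal Markov condition and faithfulness hold for the dynamic Bayesian network $\mathcal{G}$ with respect to the joint distribution of all these variables (i.e., conditional independences among the variables correspond exactly to d-separations in $\mathcal{G}$ unrolled over time). Then all binary masks $\boldsymbol{C}^{\boldsymbol{s}\to\boldsymbol{s}}$, $\boldsymbol{C}^{\boldsymbol{a}\to\boldsymbol{s}}$, $\boldsymbol{C}^{\boldsymbol{\theta}^s\to\boldsymbol{s}}$, $\boldsymbol{c}^{\boldsymbol{s}\to r}$, $\boldsymbol{c}^{\boldsymbol{a}\to r}$, $\boldsymbol{C}^{\boldsymbol{\theta}^s\to\boldsymbol{\theta}^s}$ and $\boldsymbol{C}^{\boldsymbol{\theta}^r\to\boldsymbol{\theta}^r}$ are identifiable from the joint distribution of the observed variables; that is, the causal graph $\mathcal{G}$ can be fully recovered.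
   Context: States $\boldsymbol{s}_t=(s_{1,t},\dots,s_{d,t})\in\mathbb{R}^d$, actions $\boldsymbol{a}_t\in\mathbb{R}^m$, rewards $r_t\in\mathbb{R}$, dynamics change factors $\boldsymbol{\theta}^s_t\in\mathbb{R}^p$, reward change factors $\boldsymbol{\theta}^r_t\in\mathbb{R}^q$. The generative process is, for $i=1,\dots,d$, $j=1,\dots,p$, $k=1,\dots,q$: $s_{i,t}=f_i(\boldsymbol{c}^{\boldsymbol{s}\to\boldsymbol{s}}_i\odot\boldsymbol{s}_{t-1},\ \boldsymbol{c}^{\boldsymbol{a}\to\boldsymbol{s}}_i\odot\boldsymbol{a}_{t-1},\ \boldsymbol{c}^{\boldsymbol{\theta}^s\to\boldsymbol{s}}_i\odot\boldsymbol{\theta}^s_t,\ \epsilon^s_{i,t})$; $r_t=h(\boldsymbol{c}^{\boldsymbol{s}\to r}\odot\boldsymbol{s}_t,\ \boldsymbol{c}^{\boldsymbol{a}\to r}\odot\boldsymbol{a}_t,\ \boldsymbol{\theta}^r_t,\ \epsilon^r_t)$; $\theta^s_{j,t}=g^s(\boldsymbol{c}^{\boldsymbol{\theta}^s\to\boldsymbol{\theta}^s}_j\odot\boldsymbol{\theta}^s_{t-1},\ \epsilon^{\theta^s}_t)$; $\theta^r_{k,t}=g^r(\boldsymbol{c}^{\boldsymbol{\theta}^r\to\boldsymbol{\theta}^r}_k\odot\boldsymbol{\theta}^r_{t-1},\ \epsilon^{\theta^r}_t)$, where $\odot$ is the elementwise product, $f_i,h,g^s,g^r$ are (nonlinear)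 functions, and all noise terms are i.i.d. and mutually independent. The binary masks $\boldsymbol{c}^{\boldsymbol{s}\to\boldsymbol{s}}_i\in\{0,1\}^d$, $\boldsymbol{c}^{\boldsymbol{a}\to\boldsymbol{s}}_i\in\{0,1\}^m$, $\boldsymbol{c}^{\boldsymbol{\theta}^s\to\boldsymbol{s}}_i\in\{0,1\}^p$, $\boldsymbol{c}^{\boldsymbol{s}\to r}\in\{0,1\}^d$, $\boldsymbol{c}^{\boldsymbol{a}\to r}\in\{0,1\}^m$, $\boldsymbol{c}^{\boldsymbol{\theta}^s\to\boldsymbol{\theta}^s}_j\in\{0,1\}^p$, $\boldsymbol{c}^{\boldsymbol{\theta}^r\to\boldsymbol{\theta}^r}_k\in\{0,1\}^q$ are time-invariant and grouped into matrices $\boldsymbol{C}^{\boldsymbol{s}\to\boldsymbol{s}}=[\boldsymbol{c}^{\boldsymbol{s}\to\boldsymbol{s}}_i]_{i=1}^d$, $\boldsymbol{C}^{\boldsymbol{a}\to\boldsymbol{s}}=[\boldsymbol{c}^{\boldsymbol{a}\to\boldsymbol{s}}_i]_{i=1}^d$, $\boldsymbol{C}^{\boldsymbol{\theta}^s\to\boldsymbol{s}}=[\boldsymbol{c}^{\boldsymbol{\theta}^s\to\boldsymbol{s}}_i]_{i=1}^d$, $\boldsymbol{C}^{\boldsymbol{\theta}^s\to\boldsymbol{\theta}^s}=[\boldsymbol{c}^{\boldsymbol{\theta}^s\to\boldsymbol{\theta}^s}_j]_{j=1}^p$, $\boldsymbol{C}^{\boldsymbol{\theta}^r\to\boldsymbol{\theta}^r}=[\boldsymbol{c}^{\boldsymbol{\theta}^r\to\boldsymbol{\theta}^r}_k]_{k=1}^q$.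 The dynamic Bayesian network $\mathcal{G}$ has an edge from a variable to the left-hand-side variable of an equation exactly when the corresponding mask entry equals $1$ (each component of $\boldsymbol{\theta}^r_t$ is a parent of $r_t$). Standing assumptions: the graph is time-invariant, there are no unobserved confounders, there are no instantaneous causal effects among state, action and reward variables, and actions are not caused by any other variable of the system. *)

theory Defs
  imports "HOL-Probability.Probability"
begin

text \<open>St i t = s_{i,t}, Ac k t = a_{k,t}, Rw t = r_t, Ts j t = theta^s_{j,t}, Tr k t = theta^r_{k,t}.
  Indices are 0-based (i < d, k < m, j < p, k < q), time t :: nat.\<close>
datatype var = St nat nat | Ac nat nat | Rw nat | Ts nat nat | Tr nat nat

text \<open>The binary masks. css i i' is entry i' of c^{s->s}_i, cas i k entry k of c^{a->s}_i,
  cts i j entry j of c^{theta^s->s}_i, csr i entry i of c^{s->r}, car k entry k of c^{a->r},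
  ctt j j' entry j' of c^{theta^s->theta^s}_j, crr k k' entry k' of c^{theta^r->theta^r}_k.\<close>
record masks =
  css :: "nat \<Rightarrow> nat \<Rightarrow> bool"
  cas :: "nat \<Rightarrow> nat \<Rightarrow> bool"
  cts :: "nat \<Rightarrow> nat \<Rightarrow> bool"
  csr :: "nat \<Rightarrow> bool"
  car :: "nat \<Rightarrow> bool"
  ctt :: "nat \<Rightarrow> nat \<Rightarrow> bool"
  crr :: "nat \<Rightarrow> nat \<Rightarrow> bool"

definition vars :: "nat \<Rightarrow> nat \<Rightarrow> nat \<Rightarrow> nat \<Rightarrow> var set" where
  "vars d m p q = {St i t | i t. i < d} \<union> {Ac k t | k t. k < m} \<union> range Rw
     \<union> {Ts j t | j t. j < p} \<union> {Tr k t | k t. k < q}"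

text \<open>The structural equations
  for s_t and theta_t are read for t >= 1 (initial variables at t = 0 have no parents);
  the reward equation holds for every t.\<close>
fun dbn_edge :: "nat \<Rightarrow> nat \<Rightarrow> nat \<Rightarrow> nat \<Rightarrow> masks \<Rightarrow> var \<Rightarrow> var \<Rightarrow> bool" where
  "dbn_edge d m p q c (St i' t') (St i t) = (i < d \<and> i' < d \<and> t = Suc t' \<and> css c i i')"
| "dbn_edge d m p q c (Ac k t') (St i t) = (i < d \<and> k < m \<and> t = Suc t' \<and> cas c i k)"
| "dbn_edge d m p q c (Ts j t') (St i t) = (i < d \<and> j < p \<and> t' = t \<and> 1 \<le> t \<and> cts c i j)"
| "dbn_edge d m p q c (St i t') (Rw t) = (i < d \<and> t' = t \<and> csr c i)"
| "dbn_edge d m p q c (Ac k t') (Rw t) = (k < m \<and> t' = t \<and> car c k)"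
| "dbn_edge d m p q c (Tr k t') (Rw t) = (k < q \<and> t' = t)"
| "dbn_edge d m p q c (Ts j' t') (Ts j t) = (j < p \<and> j' < p \<and> t = Suc t' \<and> ctt c j j')"
| "dbn_edge d m p q c (Tr k' t') (Tr k t) = (k < q \<and> k' < q \<and> t = Suc t' \<and> crr c k k')"
| "dbn_edge d m p q c u v = False"

definition active_path :: "('v \<Rightarrow> 'v \<Rightarrow> bool) \<Rightarrow> 'v set \<Rightarrow> 'v list \<Rightarrow> bool" where
  "active_path E Z xs \<longleftrightarrow>
     distinct xs \<and> xs \<noteq> [] \<and>
     (\<forall>n. Suc n < length xs \<longrightarrow> E (xs ! n) (xs ! Suc n) \<or> E (xs ! Suc n) (xs ! n)) \<and>
     (\<forall>n. 0 < n \<and> Suc n < length xs \<longrightarrow>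
        (if E (xs ! (n - 1)) (xs ! n) \<and> E (xs ! Suc n) (xs ! n)
         then (\<exists>z\<in>Z. E\<^sup>*\<^sup>* (xs ! n) z)
         else xs ! n \<notin> Z))"

definition d_separated :: "('v \<Rightarrow> 'v \<Rightarrow> bool) \<Rightarrow> 'v set \<Rightarrow> 'v set \<Rightarrow> 'v set \<Rightarrow> bool" where
  "d_separated E A B Z \<longleftrightarrow>
     \<not> (\<exists>xs. hd xs \<in> A \<and> last xs \<in> B \<and> active_path E Z xs)"

definition gen_sigma :: "'w measure \<Rightarrow> ('v \<Rightarrow> 'w \<Rightarrow> real) \<Rightarrow> 'v set \<Rightarrow> 'w measure" where
  "gen_sigma M X I = sigma (space M) (\<Union>v\<in>I. {X v -` B \<inter> space M | B. B \<in> sets borel})"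

definition cond_indep :: "'w measure \<Rightarrow> ('v \<Rightarrow> 'w \<Rightarrow> real) \<Rightarrow> 'v set \<Rightarrow> 'v set \<Rightarrow> 'v set \<Rightarrow> bool" where
  "cond_indep M X A B C \<longleftrightarrow>
     (\<forall>E \<in> sets (gen_sigma M X A).
        AE w in M. real_cond_exp M (gen_sigma M X (B \<union> C)) (indicator E) w
                 = real_cond_exp M (gen_sigma M X C) (indicator E) w)"

definition markov_faithful :: "'w measure \<Rightarrow> ('v \<Rightarrow> 'w \<Rightarrow> real) \<Rightarrow> 'v set \<Rightarrow> ('v \<Rightarrow> 'v \<Rightarrow> bool) \<Rightarrow> bool" where
  "markov_faithful M X V E \<longleftrightarrow>
     (\<forall>A B C. finite A \<and> finite B \<and> finite C \<and> A \<subseteq> V \<and> B \<subseteq> V \<and> C \<subseteq> V \<and>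
        A \<noteq> {} \<and> B \<noteq> {} \<and> A \<inter> B = {} \<and> A \<inter> C = {} \<and> B \<inter> C = {} \<longrightarrow>
        (cond_indep M X A B C \<longleftrightarrow> d_separated E A B C))"

definition same_masks :: "nat \<Rightarrow> nat \<Rightarrow> nat \<Rightarrow> nat \<Rightarrow> masks \<Rightarrow> masks \<Rightarrow> bool" where
  "same_masks d m p q c1 c2 \<longleftrightarrow>
     (\<forall>i<d. \<forall>i'<d. css c1 i i' = css c2 i i') \<and>
     (\<forall>i<d. \<forall>k<m. cas c1 i k = cas c2 i k) \<and>
     (\<forall>i<d. \<forall>j<p. cts c1 i j = cts c2 i j) \<and>
     (\<forall>i<d. csr c1 i = csr c2 i) \<and>
     (\<forall>k<m. car c1 k = car c2 k) \<and>
     (\<forall>j<p. \<forall>j'<p. ctt c1 j j' = ctt c2 j j') \<and>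
     (\<forall>k<q. \<forall>k'<q. crr c1 k k' = crr c2 k k')"

end

theory Submission
  imports Defs
begin

fun rk :: "var \<Rightarrow> nat" where
  "rk (St i t) = 3*t+1" | "rk (Ac k t) = 3*t" | "rk (Rw t) = 3*t+2"
| "rk (Ts j t) = 3*t" | "rk (Tr k t) = 3*t"

lemma edge_rk: "dbn_edge d m p q c u v \<Longrightarrow> rk u < rk v"
  by (cases u; cases v) auto

lemma rt_rk:
  assumes "\<And>a b. E a b \<Longrightarrow> (r::'v\<Rightarrow>nat) a < r b" "E\<^sup>*\<^sup>* a b"
  shows "r a \<le> r b"
  using assms(2) by induction (auto dest: assms(1))

lemma key:
  assumes R: "\<And>a b. E a b \<Longrightarrow> (r::'v\<Rightarrow>nat) a < r b"
    and ruv: "r u < r v" and nuv: "\<not> E u v"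
    and Z: "Z = {w. E w v}"
    and h: "hd xs = u" "last xs = v" and ap: "active_path E Z xs"
  shows False
proof -
  have dist: "distinct xs" and ne: "xs \<noteq> []"
    and adj: "\<And>n. Suc n < length xs \<Longrightarrow> E (xs ! n) (xs ! Suc n) \<or> E (xs ! Suc n) (xs ! n)"
    and col: "\<And>n. 0 < n \<Longrightarrow> Suc n < length xs \<Longrightarrow>
        (if E (xs ! (n - 1)) (xs ! n) \<and> E (xs ! Suc n) (xs ! n)
         then (\<exists>z\<in>Z. E\<^sup>*\<^sup>* (xs ! n) z) else xs ! n \<notin> Z)"
    using ap unfolding active_path_def by blast+
  obtain n where ln: "length xs = Suc n" using ne by (cases xs) auto
  have x0: "xs ! 0 = u" using h ne by (simp add: hd_conv_nth)
  have xn: "xs ! n = v" using h ne ln by (simp add: last_conv_nth)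
  have "n \<noteq> 0" using x0 xn ruv by (metis less_irrefl)
  then obtain n' where nn: "n = Suc n'" by (cases n) auto
  have noloop: "\<And>z. E\<^sup>*\<^sup>* v z \<Longrightarrow> E z v \<Longrightarrow> False"
    using rt_rk[of E r] R by (meson leD)
  have e: "E (xs ! n') v \<or> E v (xs ! n')" using adj[of n'] ln nn xn by auto
  show False
  proof (cases "E (xs ! n') v")
    case True
    have "n' \<noteq> 0"
    proof
      assume "n' = 0" thus False using True x0 nuv by simp
    qed
    have nv: "\<not> E v (xs ! n')" using R[of v "xs ! n'"] R[of "xs ! n'" v] True by linarith
    have "xs ! n' \<notin> Z" using col[of n'] ln nn xn \<open>n' \<noteq> 0\<close> nv by simp
    thus False using True Z by auto
  next
    case False
    hence ev: "E v (xs ! n')" using e by auto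
    have Q: "\<And>j. j < n \<Longrightarrow> E (xs ! (n - j)) (xs ! (n - 1 - j)) \<and> E\<^sup>*\<^sup>* v (xs ! (n - 1 - j))"
    proof -
      fix j show "j < n \<Longrightarrow> E (xs ! (n - j)) (xs ! (n - 1 - j)) \<and> E\<^sup>*\<^sup>* v (xs ! (n - 1 - j))"
      proof (induction j)
        case 0 thus ?case using ev xn nn by auto
      next
        case (Suc j)
        hence IH: "E (xs ! (n - j)) (xs ! (n - 1 - j))" "E\<^sup>*\<^sup>* v (xs ! (n - 1 - j))" by auto
        define k where "k = n - 1 - j"
        have k1: "0 < k" "Suc k < length xs" "k - 1 = n - 1 - Suc j" "Suc k = n - j"
          "n - Suc j = k"
          using Suc.prems ln by (auto simp: k_def)
        have IH0: "E (xs ! (n - j)) (xs ! k)" using IH(1) unfolding k_def .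
        have IH1: "E (xs ! Suc k) (xs ! k)" using IH0 k1(4) by simp
        have IH2: "E\<^sup>*\<^sup>* v (xs ! k)" using IH(2) unfolding k_def .
        have ad: "E (xs ! (k - 1)) (xs ! k) \<or> E (xs ! k) (xs ! (k - 1))"
          using adj[of "k - 1"] k1 by (cases k) auto
        have "\<not> E (xs ! (k - 1)) (xs ! k)"
        proof
          assume a: "E (xs ! (k - 1)) (xs ! k)"
          have "(if E (xs ! (k - 1)) (xs ! k) \<and> E (xs ! Suc k) (xs ! k)
             then (\<exists>z\<in>Z. E\<^sup>*\<^sup>* (xs ! k) z) else xs ! k \<notin> Z)" using col[of k] k1 by blast
          hence "\<exists>z\<in>Z. E\<^sup>*\<^sup>* (xs ! k) z" using a IH1 by simp
          then obtain z where z1: "z \<in> Z" and z2: "E\<^sup>*\<^sup>* (xs ! k) z" by blast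
          show False using z1 z2 noloop Z IH2 by (meson rtranclp_trans mem_Collect_eq)
        qed
        hence "E (xs ! k) (xs ! (k - 1))" using ad by auto
        moreover have "E\<^sup>*\<^sup>* v (xs ! (k - 1))"
          using calculation IH2 by (meson rtranclp.rtrancl_into_rtrancl)
        ultimately show ?case unfolding k1(3)[symmetric] k1(5) by blast
      qed
    qed
    have "E\<^sup>*\<^sup>* v u" using Q[of n'] nn x0 by simp
    hence "r v \<le> r u" using rt_rk[of E r] R by blast
    thus False using ruv by simp
  qed
qed


lemma path_edge:
  assumes "E u v" "u \<noteq> v"
  shows "\<not> d_separated E {u} {v} C"
proof -
  have "active_path E C [u, v]" using assms unfolding active_path_def
    by (auto simp: less_Suc_eq)
  thus ?thesis unfolding d_separated_def by (metis last_ConsL last_ConsR list.sel(1) list.simps(3) singletonI)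
qed

lemma par_vars: "dbn_edge d m p q c w v \<Longrightarrow> w \<in> vars d m p q"
  by (cases w; cases v) (auto simp: vars_def)

lemma fin_vars: "finite {w \<in> vars d m p q. rk w < N}"
proof (rule finite_subset)
  show "{w \<in> vars d m p q. rk w < N} \<subseteq>
    (\<lambda>(i,t). St i t) ` ({..<d}\<times>{..<N}) \<union> (\<lambda>(i,t). Ac i t) ` ({..<m}\<times>{..<N}) \<union> Rw ` {..<N}
    \<union> (\<lambda>(i,t). Ts i t) ` ({..<p}\<times>{..<N}) \<union> (\<lambda>(i,t). Tr i t) ` ({..<q}\<times>{..<N})"
    by (auto simp: vars_def image_iff)
  show "finite ((\<lambda>(i,t). St i t) ` ({..<d}\<times>{..<N}) \<union> (\<lambda>(i,t). Ac i t) ` ({..<m}\<times>{..<N}) \<union> Rw ` {..<N}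
    \<union> (\<lambda>(i,t). Ts i t) ` ({..<p}\<times>{..<N}) \<union> (\<lambda>(i,t). Tr i t) ` ({..<q}\<times>{..<N}))"
    by auto
qed

lemma transfer:
  assumes f1: "markov_faithful M X (vars d m p q) (dbn_edge d m p q c1)"
    and f2: "markov_faithful M X (vars d m p q) (dbn_edge d m p q c2)"
    and uV: "u \<in> vars d m p q" and vV: "v \<in> vars d m p q"
    and e1: "dbn_edge d m p q c1 u v"
  shows "dbn_edge d m p q c2 u v"
proof (rule ccontr)
  assume n2: "\<not> dbn_edge d m p q c2 u v"
  define C where "C = {w. dbn_edge d m p q c2 w v}"
  have ruv: "rk u < rk v" using edge_rk[OF e1] .
  hence uv: "u \<noteq> v" by auto
  have CV: "C \<subseteq> vars d m p q" using par_vars unfolding C_def by blast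
  have "C \<subseteq> {w \<in> vars d m p q. rk w < rk v}" using CV edge_rk unfolding C_def by blast
  hence fC: "finite C" using fin_vars finite_subset by blast
  have uC: "u \<notin> C" using n2 C_def by auto
  have vC: "v \<notin> C" using edge_rk[of d m p q c2 v v] C_def by auto
  have ds2: "d_separated (dbn_edge d m p q c2) {u} {v} C"
    unfolding d_separated_def
  proof
    assume "\<exists>xs. hd xs \<in> {u} \<and> last xs \<in> {v} \<and> active_path (dbn_edge d m p q c2) C xs"
    then obtain xs where "hd xs = u" "last xs = v" "active_path (dbn_edge d m p q c2) C xs" by blast
    thus False using key[of "dbn_edge d m p q c2" rk u v C xs] edge_rk ruv n2 C_def by blast
  qed
  have conds: "finite {u}" "finite {v}" "finite C" "{u} \<subseteq> vars d m p q" "{v} \<subseteq> vars d m p q"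
    "C \<subseteq> vars d m p q" "{u} \<noteq> {}" "{v} \<noteq> {}" "{u} \<inter> {v} = {}" "{u} \<inter> C = {}" "{v} \<inter> C = {}"
    using fC uV vV CV uv uC vC by auto
  have "cond_indep M X {u} {v} C" using f2 conds ds2 unfolding markov_faithful_def by blast
  hence "d_separated (dbn_edge d m p q c1) {u} {v} C" using f1 conds unfolding markov_faithful_def by blast
  thus False using path_edge[of "dbn_edge d m p q c1" u v C, OF e1 uv] by blast
qed

theorem proposition1:
  fixes M :: "'w measure" and X :: "var \<Rightarrow> 'w \<Rightarrow> real"
    and d m p q :: nat and c1 c2 :: masks
  assumes "prob_space M"
    and "\<And>v. X v \<in> borel_measurable M"
    and "markov_faithful M X (vars d m p q) (dbn_edge d m p q c1)"
    and "markov_faithful M X (vars d m p q) (dbn_edge d m p q c2)"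
  shows "same_masks d m p q c1 c2"
proof -
  have T: "\<And>u v. u \<in> vars d m p q \<Longrightarrow> v \<in> vars d m p q \<Longrightarrow>
      dbn_edge d m p q c1 u v = dbn_edge d m p q c2 u v"
    using transfer[OF assms(3) assms(4)] transfer[OF assms(4) assms(3)] by blast
  have vs: "\<And>i t. i < d \<Longrightarrow> St i t \<in> vars d m p q" "\<And>k t. k < m \<Longrightarrow> Ac k t \<in> vars d m p q"
    "\<And>t. Rw t \<in> vars d m p q" "\<And>j t. j < p \<Longrightarrow> Ts j t \<in> vars d m p q"
    "\<And>k t. k < q \<Longrightarrow> Tr k t \<in> vars d m p q" by (auto simp: vars_def)
  show ?thesis unfolding same_masks_def
  proof (intro conjI allI impI)
    fix i i' assume "i < d" "i' < d" thus "css c1 i i' = css c2 i i'" using T[of "St i' 0" "St i 1"] vs by simp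
  next
    fix i k assume "i < d" "k < m" thus "cas c1 i k = cas c2 i k" using T[of "Ac k 0" "St i 1"] vs by simp
  next
    fix i j assume "i < d" "j < p" thus "cts c1 i j = cts c2 i j" using T[of "Ts j 1" "St i 1"] vs by simp
  next
    fix i assume "i < d" thus "csr c1 i = csr c2 i" using T[of "St i 0" "Rw 0"] vs by simp
  next
    fix k assume "k < m" thus "car c1 k = car c2 k" using T[of "Ac k 0" "Rw 0"] vs by simp
  next
    fix j j' assume "j < p" "j' < p" thus "ctt c1 j j' = ctt c2 j j'" using T[of "Ts j' 0" "Ts j 1"] vs by simp
  next
    fix k k' assume "k < q" "k' < q" thus "crr c1 k k' = crr c2 k k'" using T[of "Tr k' 0" "Tr k 1"] vs by simp
  qed
qed

end
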